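(* Let $K$ be a commutative ring with unit and let $\mathfrak X$ be a class of representations in $Rep\text{-}K$ of the form $\mathfrak X=T^*=\{(V,G)\mid \text{every formula of } T \text{ holds in } (V,G)\}$, where $T$ is a set of action-type formulas. Then $\mathfrak X$ is saturated, right-hereditary and right-local.
   Context: $Rep\text{-}K$ is the variety of two-sorted algebras (representations) $(V,G)$, where $V$ is a $K$-module, $G$ a group, and $\circ: V\times G\to V$ an action such that $a\mapsto a\circ g$ is $K$-linear, $(a\circ g_1)\circ g_2=a\circ g_1g_2$, and $a\circ 1=a$. Morphisms are pairs $(\alpha,\beta)$ with $\alpha$ a $K$-module homomorphism, $\beta$ a group homomorphism, and $(a\circ g)^\alpha=a^\alpha\circ g^\beta$. For countable sets $X,Y$, let $F=F(Y)$ be the free group on $Y$, $KF$ its group algebra, and $W=W(X,Y)=(XKF,F)$ the free representation, where $XKF$ is the free right $KF$-module on $X$ with action $w\circ f=wf$. Every pair of maps $X\to V$, $Y\to G$ extends uniquely to a homomorphism $\mu=(\alpha,\beta):W\to(V,G)$. Action-type formulas are built from atomic formulas $w\equiv 0$ ($w\in XKF$) using $\vee,\wedge,\neg$ and quantifiers $\exists x$ ($x\in X$) only (no group equalities $f\equiv1$, no quantifiers over $Y$). The value $Val_{(V,G)}(u)\subseteq Hom(W,(V,G))$ is defined by: $\mu=(\alpha,\beta)\in Val(w\equiv0)$ iff $w^\alpha=0$ in $V$ (here $w^\alpha=\sum x_i^\alpha\circ u_i^\beta$ for $w=\sum x_iu_i$); $\vee,\wedge,\neg$ act as union, intersection, complement;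 $\mu=(\alpha,\beta)\in Val(\exists x\,u)$ iff there is $\nu=(\alpha',\beta)\in Val(u)$ with $\alpha'(x')=\alpha(x')$ for all $x'\in X$, $x'\neq x$. A formula $u$ holds in $(V,G)$ if $Val_{(V,G)}(u)=Hom(W,(V,G))$. For a representation $(V,G)$, the corresponding faithful representation is $(V,\overline G)$ with $\overline G=G/N$, $N$ the kernel of the action of $G$ on $V$. A class $\mathfrak X$ is saturated if $(V,G)\in\mathfrak X \iff (V,\overline G)\in\mathfrak X$; right-hereditary if $(V,G)\in\mathfrak X$ implies $(V,H)\in\mathfrak X$ for every subgroup $H\le G$; right-local if $(V,G)\in\mathfrak X$ whenever $(V,H)\in\mathfrak X$ for all finitely generated subgroups $H\le G$. *)

theory Defs
  imports "HOL-Algebra.Algebra" "HOL-Library.Countable"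
begin

text \<open>A representation (V,G) of Rep-K: V is the K-module given by the whole type 'v
  with scalar multiplication scale, G is a group (HOL-Algebra), act is the action V x G -> V.\<close>

definition is_rep ::
  "('k::comm_ring_1 \<Rightarrow> 'v::ab_group_add \<Rightarrow> 'v) \<Rightarrow> ('g, 'b) monoid_scheme \<Rightarrow> ('v \<Rightarrow> 'g \<Rightarrow> 'v) \<Rightarrow> bool"
  where "is_rep scale G act \<longleftrightarrow>
     Modules.module scale \<and> group G \<and>
     (\<forall>g\<in>carrier G. \<forall>a b. act (a + b) g = act a g + act b g) \<and>
     (\<forall>g\<in>carrier G. \<forall>k a. act (scale k a) g = scale k (act a g)) \<and>
     (\<forall>g1\<in>carrier G. \<forall>g2\<in>carrier G. \<forall>a. act (act a g1) g2 = act a (g1 \<otimes>\<^bsub>G\<^esub> g2)) \<and>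
     (\<forall>a. act a \<one>\<^bsub>G\<^esub> = a)"

text \<open>Elements of the free group F(Y) are represented by words over Y and their inverses
  ((y,True) = y, (y,False) = y^-1).  Elements of the free KF-module XKF are represented
  by finite formal sums  k_1 x_1 f_1 + ... + k_n x_n f_n.\<close>

type_synonym 'y fword = "('y \<times> bool) list"
type_synonym ('k, 'x, 'y) xkf = "('k \<times> 'x \<times> 'y fword) list"

fun weval :: "('g, 'b) monoid_scheme \<Rightarrow> ('y \<Rightarrow> 'g) \<Rightarrow> 'y fword \<Rightarrow> 'g" where
  "weval G \<beta> [] = \<one>\<^bsub>G\<^esub>"
| "weval G \<beta> ((y, b) # ws) =
     (if b then \<beta> y else inv\<^bsub>G\<^esub> (\<beta> y)) \<otimes>\<^bsub>G\<^esub> weval G \<beta> ws"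

definition xkf_eval ::
  "('k::comm_ring_1 \<Rightarrow> 'v::ab_group_add \<Rightarrow> 'v) \<Rightarrow> ('g, 'b) monoid_scheme \<Rightarrow> ('v \<Rightarrow> 'g \<Rightarrow> 'v)
   \<Rightarrow> ('x \<Rightarrow> 'v) \<Rightarrow> ('y \<Rightarrow> 'g) \<Rightarrow> ('k, 'x, 'y) xkf \<Rightarrow> 'v" where
  "xkf_eval scale G act \<alpha> \<beta> w =
     sum_list (map (\<lambda>(k, x, f). scale k (act (\<alpha> x) (weval G \<beta> f))) w)"

datatype ('k, 'x, 'y) aform =
    Eq0 "('k, 'x, 'y) xkf"
  | Or "('k, 'x, 'y) aform" "('k, 'x, 'y) aform"
  | And "('k, 'x, 'y) aform" "('k, 'x, 'y) aform"
  | Neg "('k, 'x, 'y) aform"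
  | Ex 'x "('k, 'x, 'y) aform"

text \<open>Hom(W,(V,G)) is identified with pairs of maps X -> V, Y -> G.\<close>
definition homs :: "('g, 'b) monoid_scheme \<Rightarrow> (('x \<Rightarrow> 'v) \<times> ('y \<Rightarrow> 'g)) set" where
  "homs G = {(\<alpha>, \<beta>). \<forall>y. \<beta> y \<in> carrier G}"

fun val ::
  "('k::comm_ring_1 \<Rightarrow> 'v::ab_group_add \<Rightarrow> 'v) \<Rightarrow> ('g, 'b) monoid_scheme \<Rightarrow> ('v \<Rightarrow> 'g \<Rightarrow> 'v)
   \<Rightarrow> ('k, 'x, 'y) aform \<Rightarrow> (('x \<Rightarrow> 'v) \<times> ('y \<Rightarrow> 'g)) set" where
  "val scale G act (Eq0 w) = {(\<alpha>, \<beta>) \<in> homs G. xkf_eval scale G act \<alpha> \<beta> w = 0}"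
| "val scale G act (Or u v) = val scale G act u \<union> val scale G act v"
| "val scale G act (And u v) = val scale G act u \<inter> val scale G act v"
| "val scale G act (Neg u) = homs G - val scale G act u"
| "val scale G act (Ex x u) =
     {(\<alpha>, \<beta>) \<in> homs G. \<exists>a. (\<alpha>(x := a), \<beta>) \<in> val scale G act u}"

definition holds_in ::
  "('k::comm_ring_1, 'x, 'y) aform \<Rightarrow> ('k \<Rightarrow> 'v::ab_group_add \<Rightarrow> 'v) \<Rightarrow> ('g, 'b) monoid_scheme
   \<Rightarrow> ('v \<Rightarrow> 'g \<Rightarrow> 'v) \<Rightarrow> bool" where
  "holds_in u scale G act \<longleftrightarrow> val scale G act u = homs G"

definition in_Tstar ::
  "('k::comm_ring_1, 'x, 'y) aform set \<Rightarrow> ('k \<Rightarrow> 'v::ab_group_add \<Rightarrow> 'v) \<Rightarrow> ('g, 'b) monoid_scheme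
   \<Rightarrow> ('v \<Rightarrow> 'g \<Rightarrow> 'v) \<Rightarrow> bool" where
  "in_Tstar T scale G act \<longleftrightarrow> is_rep scale G act \<and> (\<forall>u\<in>T. holds_in u scale G act)"

definition act_kernel :: "('g, 'b) monoid_scheme \<Rightarrow> ('v \<Rightarrow> 'g \<Rightarrow> 'v) \<Rightarrow> 'g set" where
  "act_kernel G act = {g \<in> carrier G. \<forall>a. act a g = a}"

definition faithful_group :: "('g, 'b) monoid_scheme \<Rightarrow> ('v \<Rightarrow> 'g \<Rightarrow> 'v) \<Rightarrow> 'g set monoid" where
  "faithful_group G act = G Mod (act_kernel G act)"

definition faithful_act :: "('v \<Rightarrow> 'g \<Rightarrow> 'v) \<Rightarrow> 'v \<Rightarrow> 'g set \<Rightarrow> 'v" where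
  "faithful_act act a C = act a (SOME g. g \<in> C)"

definition fin_gen_subgroup :: "'g set \<Rightarrow> ('g, 'b) monoid_scheme \<Rightarrow> bool" where
  "fin_gen_subgroup H G \<longleftrightarrow> subgroup H G \<and> (\<exists>S. finite S \<and> S \<subseteq> carrier G \<and> H = generate G S)"

end

theory Submission
  imports Defs
begin

lemma val_sub_homs: "val scale G act u \<subseteq> homs G"
  by (induction u) auto

lemma holds_in_iff: "holds_in u scale G act \<longleftrightarrow> homs G \<subseteq> val scale G act u"
  unfolding holds_in_def using val_sub_homs by blast

lemma weval_closed: "group G \<Longrightarrow> \<forall>y. \<beta> y \<in> carrier G \<Longrightarrow> weval G \<beta> f \<in> carrier G"
  by (induction f) (auto simp: group.is_monoid monoid.m_closed group.inv_closed monoid.one_closed)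

lemma weval_sub:
  assumes "group G" "subgroup H G" "\<forall>y. \<beta> y \<in> H"
  shows "weval (G\<lparr>carrier := H\<rparr>) \<beta> f = weval G \<beta> f"
  using assms by (induction f) (auto simp: group.m_inv_consistent)

lemma val_subgroup:
  assumes "group G" "subgroup H G" "\<forall>y. \<beta> y \<in> H"
  shows "((\<alpha>,\<beta>) \<in> val scale (G\<lparr>carrier:=H\<rparr>) act u) = ((\<alpha>,\<beta>) \<in> val scale G act u)"
proof -
  have hG: "\<forall>y. \<beta> y \<in> carrier G"
    using assms subgroup.subset by blast
  have hH: "\<forall>y. \<beta> y \<in> carrier (G\<lparr>carrier:=H\<rparr>)"
    using assms by simp
  show ?thesis
  proof (induction u arbitrary: \<alpha>)
    case (Eq0 w)
    show ?case using hG hH by (simp add: xkf_eval_def homs_def weval_sub[OF assms])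
  next
    case (Neg u)
    then show ?case using hG hH by (simp add: homs_def fun_upd_def)
  next
    case (Ex x u)
    then show ?case using hG hH by (simp add: homs_def fun_upd_def)
  qed auto
qed


fun fys :: "('k, 'x, 'y) aform \<Rightarrow> 'y set" where
  "fys (Eq0 w) = (\<Union>(k,x,f)\<in>set w. fst ` set f)"
| "fys (Or u v) = fys u \<union> fys v"
| "fys (And u v) = fys u \<union> fys v"
| "fys (Neg u) = fys u"
| "fys (Ex x u) = fys u"

lemma finite_fys: "finite (fys u)"
  by (induction u) auto

lemma weval_agree: "\<forall>y\<in>fst ` set f. \<beta> y = \<beta>' y \<Longrightarrow> weval G \<beta> f = weval G \<beta>' f"
  by (induction f) auto

lemma val_agree:
  assumes "\<forall>y\<in>fys u. \<beta> y = \<beta>' y" "\<forall>y. \<beta> y \<in> carrier G" "\<forall>y. \<beta>' y \<in> carrier G"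
  shows "((\<alpha>,\<beta>) \<in> val scale G act u) = ((\<alpha>,\<beta>') \<in> val scale G act u)"
  using assms(1)
proof (induction u arbitrary: \<alpha>)
  case (Eq0 w)
  have "xkf_eval scale G act \<alpha> \<beta> w = xkf_eval scale G act \<alpha> \<beta>' w"
    unfolding xkf_eval_def
  proof (rule arg_cong[where f=sum_list], rule map_cong[OF refl])
    fix t assume "t \<in> set w"
    then show "(\<lambda>(k, x, f). scale k (act (\<alpha> x) (weval G \<beta> f))) t =
          (\<lambda>(k, x, f). scale k (act (\<alpha> x) (weval G \<beta>' f))) t"
    proof -
      obtain k x f where fields: "t = (k,x,f)" by (cases t)
      have "\<forall>y\<in>fst ` set f. \<beta> y = \<beta>' y" using Eq0 \<open>t \<in> set w\<close> fields by force
      then have "weval G \<beta> f = weval G \<beta>' f" by (rule weval_agree)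
      then show ?thesis using fields by simp
    qed
  qed
  then show ?case using assms(2,3) by (simp add: homs_def)
next
  case (Neg u)
  then show ?case using assms(2,3) by (simp add: homs_def)
next
  case (Ex x u)
  then show ?case using assms(2,3) by (simp add: homs_def fun_upd_def)
qed auto

lemma is_rep_group: "is_rep scale G act \<Longrightarrow> group G"
  by (simp add: is_rep_def)

lemma kernel_normal:
  fixes G :: "('g, 'b) monoid_scheme" (structure)
  assumes "is_rep scale G act"
  shows "act_kernel G act \<lhd> G"
proof -
  interpret group G using assms by (simp add: is_rep_def)
  have comp: "\<And>a g1 g2. g1 \<in> carrier G \<Longrightarrow> g2 \<in> carrier G \<Longrightarrow> act (act a g1) g2 = act a (g1 \<otimes> g2)"
    and one: "\<And>a. act a \<one> = a" using assms by (auto simp: is_rep_def)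
  have sub: "subgroup (act_kernel G act) G"
  proof
    show "act_kernel G act \<subseteq> carrier G" by (auto simp: act_kernel_def)
    show "\<one> \<in> act_kernel G act" using one by (auto simp: act_kernel_def)
    fix x y assume x: "x \<in> act_kernel G act" and y: "y \<in> act_kernel G act"
    then show "x \<otimes> y \<in> act_kernel G act" using comp[symmetric] by (auto simp: act_kernel_def)
    have "act a (inv x) = a" for a
    proof -
      have "act a (inv x) = act (act a x) (inv x)" using x by (simp add: act_kernel_def)
      also have "\<dots> = a" using x comp[of x "inv x"] one by (simp add: act_kernel_def)
      finally show ?thesis .
    qed
    then show "inv x \<in> act_kernel G act" using x by (auto simp: act_kernel_def)
  qed
  have "x \<otimes> h \<otimes> inv x \<in> act_kernel G act" if x: "x \<in> carrier G" and h: "h \<in> act_kernel G act" for x h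
  proof -
    have hc: "h \<in> carrier G" using h by (simp add: act_kernel_def)
    have "act a (x \<otimes> h \<otimes> inv x) = a" for a
    proof -
      have "act a (x \<otimes> h \<otimes> inv x) = act (act (act a x) h) (inv x)"
        using comp x hc by simp
      also have "\<dots> = act (act a x) (inv x)" using h by (simp add: act_kernel_def)
      also have "\<dots> = a" using comp x one by simp
      finally show ?thesis .
    qed
    then show ?thesis using x hc by (simp add: act_kernel_def)
  qed
  then show ?thesis using sub normal_inv_iff by blast
qed

lemma fa_coset:
  fixes G :: "('g, 'b) monoid_scheme" (structure)
  assumes "is_rep scale G act" "g \<in> carrier G"
  shows "faithful_act act a (act_kernel G act #> g) = act a g"
proof -
  interpret normal "act_kernel G act" G using kernel_normal[OF assms(1)] .
  have comp: "\<And>a g1 g2. g1 \<in> carrier G \<Longrightarrow> g2 \<in> carrier G \<Longrightarrow> act (act a g1) g2 = act a (g1 \<otimes> g2)"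
    using assms by (auto simp: is_rep_def)
  have "g \<in> act_kernel G act #> g" by (rule rcos_self[OF assms(2) is_subgroup])
  then have "(SOME h. h \<in> act_kernel G act #> g) \<in> act_kernel G act #> g" by (rule someI)
  then obtain n where n: "n \<in> act_kernel G act" and e: "(SOME h. h \<in> act_kernel G act #> g) = n \<otimes> g"
    unfolding r_coset_def by blast
  have nc: "n \<in> carrier G" and na: "act a n = a" using n unfolding act_kernel_def by auto
  have "act a (n \<otimes> g) = act (act a n) g" using comp[OF nc assms(2)] by simp
  also have "\<dots> = act a g" using na by simp
  finally show ?thesis unfolding faithful_act_def e .
qed

lemma weval_quot:
  fixes G :: "('g, 'b) monoid_scheme" (structure)
  assumes "is_rep scale G act" "\<forall>y. \<beta> y \<in> carrier G" "\<forall>y. \<beta>' y = act_kernel G act #> \<beta> y"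
  shows "weval (G Mod act_kernel G act) \<beta>' f = act_kernel G act #> weval G \<beta> f"
proof (induction f)
  case Nil
  interpret normal "act_kernel G act" G using kernel_normal[OF assms(1)] .
  show ?case by (simp add: subset)
next
  case (Cons p f)
  interpret normal "act_kernel G act" G using kernel_normal[OF assms(1)] .
  obtain y b where p: "p = (y,b)" by (cases p)
  have wc: "weval G \<beta> f \<in> carrier G" using weval_closed[OF is_group assms(2)] .
  have yc: "\<beta> y \<in> carrier G" using assms(2) by blast
  have inC: "\<beta>' y \<in> carrier (G Mod act_kernel G act)"
    using assms(3) yc by (simp add: FactGroup_def rcosetsI subset)
  show ?case
  proof (cases b)
    case True
    then show ?thesis using Cons p assms(3) yc wc by (simp add: rcos_sum)
  next
    case False
    have "inv\<^bsub>G Mod act_kernel G act\<^esub> (\<beta>' y) = act_kernel G act #> inv (\<beta> y)"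
      using inv_FactGroup[OF inC] assms(3) rcos_inv[OF yc] by simp
    then show ?thesis using Cons p False yc wc by (simp add: rcos_sum)
  qed
qed


lemma val_quot:
  fixes G :: "('g, 'b) monoid_scheme" (structure)
  assumes rep: "is_rep scale G act" and hb: "\<forall>y. \<beta> y \<in> carrier G"
    and hb': "\<forall>y. \<beta>' y = act_kernel G act #> \<beta> y"
  shows "((\<alpha>,\<beta>) \<in> val scale G act u) =
         ((\<alpha>,\<beta>') \<in> val scale (G Mod act_kernel G act) (faithful_act act) u)"
proof -
  interpret normal "act_kernel G act" G using kernel_normal[OF rep] .
  have h1: "\<forall>y. \<beta>' y \<in> carrier (G Mod act_kernel G act)"
    using hb hb' by (simp add: FactGroup_def rcosetsI subset)
  have ev: "weval (G Mod act_kernel G act) \<beta>' f = act_kernel G act #> weval G \<beta> f" for f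
    by (rule weval_quot[OF rep hb hb'])
  have fa: "faithful_act act a (weval (G Mod act_kernel G act) \<beta>' f) = act a (weval G \<beta> f)" for a f
    unfolding ev by (rule fa_coset[OF rep weval_closed[OF is_group hb]])
  show ?thesis
  proof (induction u arbitrary: \<alpha>)
    case (Eq0 w)
    show ?case using hb h1 by (simp add: xkf_eval_def homs_def fa)
  next
    case (Neg u)
    then show ?case using hb h1 by (simp add: homs_def)
  next
    case (Ex x u)
    then show ?case using hb h1 by (simp add: homs_def fun_upd_def)
  qed auto
qed

lemma holds_quot:
  fixes G :: "('g, 'b) monoid_scheme" (structure)
    and u :: "('k::comm_ring_1, 'x, 'y) aform" and scale :: "'k \<Rightarrow> 'v::ab_group_add \<Rightarrow> 'v"
  assumes rep: "is_rep scale G act"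
  shows "holds_in u scale G act \<longleftrightarrow> holds_in u scale (G Mod act_kernel G act) (faithful_act act)"
proof -
  interpret normal "act_kernel G act" G using kernel_normal[OF rep] .
  show ?thesis
  proof
    assume h: "holds_in u scale G act"
    show "holds_in u scale (G Mod act_kernel G act) (faithful_act act)"
      unfolding holds_in_iff
    proof (clarify)
      fix \<alpha> :: "'x \<Rightarrow> 'v" and \<beta>' :: "'y \<Rightarrow> 'g set" assume "(\<alpha>, \<beta>') \<in> homs (G Mod act_kernel G act)"
      then have "\<forall>y. \<exists>g. g \<in> carrier G \<and> \<beta>' y = act_kernel G act #> g"
        by (auto simp: homs_def FactGroup_def RCOSETS_def)
      then obtain \<beta> :: "'y \<Rightarrow> 'g" where hb: "\<forall>y. \<beta> y \<in> carrier G" and hb': "\<forall>y. \<beta>' y = act_kernel G act #> \<beta> y"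
        by metis
      have "(\<alpha>, \<beta>) \<in> val scale G act u" using h hb unfolding holds_in_iff homs_def by blast
      then show "(\<alpha>, \<beta>') \<in> val scale (G Mod act_kernel G act) (faithful_act act) u"
        using val_quot[OF rep hb hb', where \<alpha>=\<alpha> and u=u] by blast
    qed
  next
    assume h: "holds_in u scale (G Mod act_kernel G act) (faithful_act act)"
    show "holds_in u scale G act"
      unfolding holds_in_iff
    proof (clarify)
      fix \<alpha> :: "'x \<Rightarrow> 'v" and \<beta> :: "'y \<Rightarrow> 'g" assume "(\<alpha>, \<beta>) \<in> homs G"
      then have hb: "\<forall>y. \<beta> y \<in> carrier G" by (simp add: homs_def)
      define \<beta>' where "\<beta>' = (\<lambda>y. act_kernel G act #> \<beta> y)"
      have hb': "\<forall>y. \<beta>' y = act_kernel G act #> \<beta> y" by (simp add: \<beta>'_def)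
      have "\<forall>y. \<beta>' y \<in> carrier (G Mod act_kernel G act)"
        using hb hb' by (simp add: FactGroup_def rcosetsI subset)
      then have "(\<alpha>, \<beta>') \<in> val scale (G Mod act_kernel G act) (faithful_act act) u"
        using h unfolding holds_in_iff homs_def by blast
      then show "(\<alpha>, \<beta>) \<in> val scale G act u"
        using val_quot[OF rep hb hb', where \<alpha>=\<alpha> and u=u] by blast
    qed
  qed
qed

lemma is_rep_quot:
  fixes G :: "('g, 'b) monoid_scheme" (structure)
  assumes rep: "is_rep scale G act"
  shows "is_rep scale (G Mod act_kernel G act) (faithful_act act)"
proof -
  interpret normal "act_kernel G act" G using kernel_normal[OF rep] .
  have add: "\<And>g a b. g \<in> carrier G \<Longrightarrow> act (a + b) g = act a g + act b g"
    and sc: "\<And>g k a. g \<in> carrier G \<Longrightarrow> act (scale k a) g = scale k (act a g)"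
    and comp: "\<And>a g1 g2. g1 \<in> carrier G \<Longrightarrow> g2 \<in> carrier G \<Longrightarrow> act (act a g1) g2 = act a (g1 \<otimes> g2)"
    and one: "\<And>a. act a \<one> = a"
    and md: "Modules.module scale"
    using rep by (auto simp: is_rep_def)
  have car: "\<And>C. C \<in> carrier (G Mod act_kernel G act) \<Longrightarrow> \<exists>g\<in>carrier G. C = act_kernel G act #> g"
    by (auto simp: FactGroup_def RCOSETS_def)
  have fa: "\<And>g a. g \<in> carrier G \<Longrightarrow> faithful_act act a (act_kernel G act #> g) = act a g"
    by (rule fa_coset[OF rep])
  show ?thesis
    unfolding is_rep_def
  proof (intro conjI ballI allI)
    show "Modules.module scale" by (rule md)
    show "group (G Mod act_kernel G act)" by (rule factorgroup_is_group)
  next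
    fix C a b assume "C \<in> carrier (G Mod act_kernel G act)"
    then obtain g where g: "g \<in> carrier G" "C = act_kernel G act #> g" using car by blast
    show "faithful_act act (a + b) C = faithful_act act a C + faithful_act act b C"
      using g fa add by simp
  next
    fix C k a assume "C \<in> carrier (G Mod act_kernel G act)"
    then obtain g where g: "g \<in> carrier G" "C = act_kernel G act #> g" using car by blast
    show "faithful_act act (scale k a) C = scale k (faithful_act act a C)"
      using g fa sc by simp
  next
    fix C1 C2 a assume "C1 \<in> carrier (G Mod act_kernel G act)" "C2 \<in> carrier (G Mod act_kernel G act)"
    then obtain g1 g2 where g: "g1 \<in> carrier G" "C1 = act_kernel G act #> g1"
      "g2 \<in> carrier G" "C2 = act_kernel G act #> g2" using car by blast
    have "C1 \<otimes>\<^bsub>G Mod act_kernel G act\<^esub> C2 = act_kernel G act #> (g1 \<otimes> g2)"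
      using g by (simp add: rcos_sum)
    then show "faithful_act act (faithful_act act a C1) C2 = faithful_act act a (C1 \<otimes>\<^bsub>G Mod act_kernel G act\<^esub> C2)"
      using g fa comp by simp
  next
    fix a
    have "faithful_act act a (act_kernel G act #> \<one>) = a" using fa[OF one_closed] one by simp
    then show "faithful_act act a \<one>\<^bsub>G Mod act_kernel G act\<^esub> = a" using coset_mult_one[OF subset] by simp
  qed
qed

lemma is_rep_sub:
  fixes G :: "('g, 'b) monoid_scheme" (structure)
  assumes rep: "is_rep scale G act" and H: "subgroup H G"
  shows "is_rep scale (G\<lparr>carrier := H\<rparr>) act"
  using rep subgroup.subgroup_is_group[OF H] subgroup.subset[OF H]
  unfolding is_rep_def by (auto simp: subset_iff)

lemma holds_sub:
  fixes G :: "('g, 'b) monoid_scheme" (structure)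
    and u :: "('k::comm_ring_1, 'x, 'y) aform" and scale :: "'k \<Rightarrow> 'v::ab_group_add \<Rightarrow> 'v"
  assumes g: "group G" and H: "subgroup H G" and h: "holds_in u scale G act"
  shows "holds_in u scale (G\<lparr>carrier := H\<rparr>) act"
  unfolding holds_in_iff
proof clarify
  fix \<alpha> :: "'x \<Rightarrow> 'v" and \<beta> :: "'y \<Rightarrow> 'g" assume "(\<alpha>, \<beta>) \<in> homs (G\<lparr>carrier := H\<rparr>)"
  then have hb: "\<forall>y. \<beta> y \<in> H" by (simp add: homs_def)
  then have "(\<alpha>, \<beta>) \<in> homs G" using subgroup.subset[OF H] by (auto simp: homs_def)
  then have "(\<alpha>, \<beta>) \<in> val scale G act u" using h unfolding holds_in_iff by blast
  then show "(\<alpha>, \<beta>) \<in> val scale (G\<lparr>carrier := H\<rparr>) act u"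
    using val_subgroup[OF g H hb, of \<alpha> scale act u] by blast
qed


lemma local_part:
  fixes G :: "('g, 'b) monoid_scheme" (structure)
    and u :: "('k::comm_ring_1, 'x, 'y) aform" and scale :: "'k \<Rightarrow> 'v::ab_group_add \<Rightarrow> 'v"
  assumes rep: "is_rep scale G act"
    and hyp: "\<And>H. fin_gen_subgroup H G \<Longrightarrow> holds_in u scale (G\<lparr>carrier := H\<rparr>) act"
  shows "holds_in u scale G act"
  unfolding holds_in_iff
proof clarify
  interpret group G using rep by (simp add: is_rep_def)
  fix \<alpha> :: "'x \<Rightarrow> 'v" and \<beta> :: "'y \<Rightarrow> 'g"
  assume "(\<alpha>, \<beta>) \<in> homs G"
  then have hb: "\<forall>y. \<beta> y \<in> carrier G" by (simp add: homs_def)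
  define \<beta>1 where "\<beta>1 = (\<lambda>y. if y \<in> fys u then \<beta> y else \<one>)"
  define S where "S = range \<beta>1"
  define H where "H = generate G S"
  have Sc: "S \<subseteq> carrier G" using hb by (auto simp: S_def \<beta>1_def)
  have "S \<subseteq> insert \<one> (\<beta> ` fys u)" by (auto simp: S_def \<beta>1_def)
  then have Sf: "finite S" using finite_fys[of u] finite_subset by blast
  have Hs: "subgroup H G" unfolding H_def by (rule generate_is_subgroup[OF Sc])
  have "fin_gen_subgroup H G" unfolding fin_gen_subgroup_def using Hs Sf Sc H_def by blast
  then have hH: "holds_in u scale (G\<lparr>carrier := H\<rparr>) act" by (rule hyp)
  have b1H: "\<forall>y. \<beta>1 y \<in> H" unfolding H_def S_def by (auto intro: generate.incl)
  then have "(\<alpha>, \<beta>1) \<in> homs (G\<lparr>carrier := H\<rparr>)" by (simp add: homs_def)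
  then have "(\<alpha>, \<beta>1) \<in> val scale (G\<lparr>carrier := H\<rparr>) act u" using hH unfolding holds_in_iff by blast
  then have "(\<alpha>, \<beta>1) \<in> val scale G act u"
    using val_subgroup[OF is_group Hs b1H, of \<alpha> scale act u] by blast
  moreover have "\<forall>y. \<beta>1 y \<in> carrier G" using hb by (simp add: \<beta>1_def)
  moreover have "\<forall>y\<in>fys u. \<beta> y = \<beta>1 y" by (simp add: \<beta>1_def)
  ultimately show "(\<alpha>, \<beta>) \<in> val scale G act u"
    using val_agree[of u \<beta> \<beta>1 G \<alpha> scale act] hb by blast
qed

theorem theorem2p1:
  fixes T :: "('k::comm_ring_1, 'x::countable, 'y::countable) aform set"
  shows
   "(\<forall>(scale :: 'k \<Rightarrow> 'v::ab_group_add \<Rightarrow> 'v) (G :: ('g, 'b) monoid_scheme) act.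
        is_rep scale G act \<longrightarrow>
        (in_Tstar T scale G act \<longleftrightarrow>
         in_Tstar T scale (faithful_group G act) (faithful_act act))) \<and>
    (\<forall>(scale :: 'k \<Rightarrow> 'v \<Rightarrow> 'v) (G :: ('g, 'b) monoid_scheme) act H.
        in_Tstar T scale G act \<and> subgroup H G \<longrightarrow>
        in_Tstar T scale (G\<lparr>carrier := H\<rparr>) act) \<and>
    (\<forall>(scale :: 'k \<Rightarrow> 'v \<Rightarrow> 'v) (G :: ('g, 'b) monoid_scheme) act.
        is_rep scale G act \<and>
        (\<forall>H. fin_gen_subgroup H G \<longrightarrow> in_Tstar T scale (G\<lparr>carrier := H\<rparr>) act) \<longrightarrow>
        in_Tstar T scale G act)"
proof (intro conjI allI impI)
  fix scale :: "'k \<Rightarrow> 'v \<Rightarrow> 'v" and G :: "('g, 'b) monoid_scheme" and act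
  assume rep: "is_rep scale G act"
  show "in_Tstar T scale G act \<longleftrightarrow> in_Tstar T scale (faithful_group G act) (faithful_act act)"
    unfolding in_Tstar_def faithful_group_def using rep is_rep_quot[OF rep] holds_quot[OF rep] by blast
next
  fix scale :: "'k \<Rightarrow> 'v \<Rightarrow> 'v" and G :: "('g, 'b) monoid_scheme" and act H
  assume a: "in_Tstar T scale G act \<and> subgroup H G"
  then have rep: "is_rep scale G act" by (simp add: in_Tstar_def)
  show "in_Tstar T scale (G\<lparr>carrier := H\<rparr>) act"
    unfolding in_Tstar_def
    using a is_rep_sub[OF rep] holds_sub[OF is_rep_group[OF rep]] unfolding in_Tstar_def by blast
next
  fix scale :: "'k \<Rightarrow> 'v \<Rightarrow> 'v" and G :: "('g, 'b) monoid_scheme" and act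
  assume a: "is_rep scale G act \<and>
        (\<forall>H. fin_gen_subgroup H G \<longrightarrow> in_Tstar T scale (G\<lparr>carrier := H\<rparr>) act)"
  then have rep: "is_rep scale G act" by blast
  have "holds_in u scale G act" if "u \<in> T" for u
    using local_part[OF rep] a that unfolding in_Tstar_def by blast
  then show "in_Tstar T scale G act" using rep unfolding in_Tstar_def by blast
qed

end
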